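(* Let $T:V\to\mathfrak g$ be a relative Rota-Baxter operator on a Lie-Yamaguti algebra $(\mathfrak g,[\cdot,\cdot],[\![\cdot,\cdot,\cdot]\!])$ with respect to a representation $(V;\rho,\mu)$, and let $(V,*,\{\cdot,\cdot,\cdot\})$ be the pre-Lie-Yamaguti algebra with $u*v=\rho(Tu)v$, $\{u,v,w\}=\mu(Tv,Tw)u$. Then $T$ is a homomorphism of Lie-Yamaguti algebras from $(V,[\cdot,\cdot]_C,[\![\cdot,\cdot,\cdot]\!]_C)$ to $(\mathfrak g,[\cdot,\cdot],[\![\cdot,\cdot,\cdot]\!])$, where $[u,v]_C=\rho(Tu)v-\rho(Tv)u$ and $[\![u,v,w]\!]_C=D_{\rho,\mu}(Tu,Tv)w+\mu(Tv,Tw)u-\mu(Tu,Tw)v$. Furthermore, $T(V)$ is a Lie-Yamaguti subalgebra of $\mathfrak g$ and there is an induced pre-Lie-Yamaguti algebra structure on $T(V)$ given by $Tu*Tv=T(u*v)$ and $\{Tu,Tv,Tw\}=T\{u,v,w\}$ for $u,v,w\in V$.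
   Context: All vector spaces are over a field of characteristic $0$. A Lie-Yamaguti algebra is a vector space $\mathfrak g$ with a bilinear skew-symmetric $[\cdot,\cdot]$ and a trilinear $[\![\cdot,\cdot,\cdot]\!]$ skew-symmetric in its first two arguments such that for all $x,y,z,w,t$: (1) $[[x,y],z]+[[y,z],x]+[[z,x],y]+[\![x,y,z]\!]+[\![y,z,x]\!]+[\![z,x,y]\!]=0$; (2) $[\![[x,y],z,w]\!]+[\![[y,z],x,w]\!]+[\![[z,x],y,w]\!]=0$; (3) $[\![x,y,[z,w]]\!]=[[\![x,y,z]\!],w]+[z,[\![x,y,w]\!]]$; (4) $[\![x,y,[\![z,w,t]\!]]\!]=[\![[\![x,y,z]\!],w,t]\!]+[\![z,[\![x,y,w]\!],t]\!]+[\![z,w,[\![x,y,t]\!]]\!]$. A homomorphism of Lie-Yamaguti algebras is a linear map preserving both brackets. A representation $(V;\rho,\mu)$ of $\mathfrak g$ is a linear $\rho:\mathfrak g\to\mathfrak{gl}(V)$ and bilinear $\mu:\otimes^2\mathfrak g\to\mathfrak{gl}(V)$ such that, with $D_{\rho,\mu}(x,y):=\mu(y,x)-\mu(x,y)+[\rho(x),\rho(y)]-\rho([x,y])$: $\mu([x,y],z)-\mu(x,z)\rho(y)+\mu(y,z)\rho(x)=0$; $\mu(x,[y,z])-\rho(y)\mu(x,z)+\rho(z)\mu(x,y)=0$; $\rho([\![x,y,z]\!])=[D_{\rho,\mu}(x,y),\rho(z)]$; $\mu(z,w)\mu(x,y)-\mu(y,w)\mu(x,z)-\mu(x,[\![y,z,w]\!])+D_{\rho,\mu}(y,z)\mu(x,w)=0$;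 $\mu([\![x,y,z]\!],w)+\mu(z,[\![x,y,w]\!])=[D_{\rho,\mu}(x,y),\mu(z,w)]$. A relative Rota-Baxter operator on $\mathfrak g$ with respect to $(V;\rho,\mu)$ is a linear map $T:V\to\mathfrak g$ with $[Tu,Tv]=T(\rho(Tu)v-\rho(Tv)u)$ and $[\![Tu,Tv,Tw]\!]=T(D_{\rho,\mu}(Tu,Tv)w+\mu(Tv,Tw)u-\mu(Tu,Tw)v)$ for all $u,v,w\in V$. A pre-Lie-Yamaguti algebra is a vector space $A$ with a bilinear operation $*$ and a trilinear operation $\{\cdot,\cdot,\cdot\}$ such that, writing $[x,y]_C=x*y-y*x$, $(x,y,z)=(x*y)*z-x*(y*z)$ and $\{x,y,z\}_D=\{z,y,x\}-\{z,x,y\}+(y,x,z)-(x,y,z)$, for all $x,y,z,w,t\in A$: (P1) $\{z,[x,y]_C,w\}-\{y*z,x,w\}+\{x*z,y,w\}=0$; (P2) $\{x,y,[z,w]_C\}=z*\{x,y,w\}-w*\{x,y,z\}$; (P3) $\{\{x,y,z\},w,t\}-\{\{x,y,w\},z,t\}-\{x,y,\{z,w,t\}_D\}-\{x,y,\{z,w,t\}\}+\{x,y,\{w,z,t\}\}+\{z,w,\{x,y,t\}\}_D=0$; (P4) $\{z,\{x,y,w\}_D,t\}+\{z,\{x,y,w\},t\}-\{z,\{y,x,w\},t\}+\{z,w,\{x,y,t\}_D\}+\{z,w,\{x,y,t\}\}-\{z,w,\{y,x,t\}\}=\{x,y,\{z,w,t\}\}_D-\{\{x,y,z\}_D,w,t\}$;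 (P5) $\{x,y,z\}_D*w+\{x,y,z\}*w-\{y,x,z\}*w=\{x,y,z*w\}_D-z*\{x,y,w\}_D$. Its subadjacent Lie-Yamaguti algebra has brackets $[x,y]_C$ and $[\![x,y,z]\!]_C=\{x,y,z\}_D+\{x,y,z\}-\{y,x,z\}$. *)

theory Defs
  imports Main "HOL.Vector_Spaces"
begin

text \<open>Structures are relativised
to a carrier S (a subspace), so that the same notions apply to subalgebras.\<close>

definition subspace_in :: "('k::field \<Rightarrow> 'v::ab_group_add \<Rightarrow> 'v) \<Rightarrow> 'v set \<Rightarrow> bool" where
  "subspace_in s S \<longleftrightarrow> 0 \<in> S \<and> (\<forall>x\<in>S. \<forall>y\<in>S. x + y \<in> S) \<and> (\<forall>c. \<forall>x\<in>S. s c x \<in> S)"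

definition bilinear_on :: "('k::field \<Rightarrow> 'v::ab_group_add \<Rightarrow> 'v) \<Rightarrow> 'v set \<Rightarrow> ('v \<Rightarrow> 'v \<Rightarrow> 'v) \<Rightarrow> bool" where
  "bilinear_on s S b \<longleftrightarrow>
     (\<forall>a. \<forall>x\<in>S. \<forall>y\<in>S. \<forall>z\<in>S.
        b (s a x + y) z = s a (b x z) + b y z \<and>
        b z (s a x + y) = s a (b z x) + b z y)"

definition trilinear_on :: "('k::field \<Rightarrow> 'v::ab_group_add \<Rightarrow> 'v) \<Rightarrow> 'v set \<Rightarrow> ('v \<Rightarrow> 'v \<Rightarrow> 'v \<Rightarrow> 'v) \<Rightarrow> bool" where
  "trilinear_on s S t \<longleftrightarrow>
     (\<forall>a. \<forall>x\<in>S. \<forall>y\<in>S. \<forall>z\<in>S. \<forall>w\<in>S.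
        t (s a x + y) z w = s a (t x z w) + t y z w \<and>
        t z (s a x + y) w = s a (t z x w) + t z y w \<and>
        t z w (s a x + y) = s a (t z w x) + t z w y)"

definition LY_on :: "('k::field \<Rightarrow> 'g::ab_group_add \<Rightarrow> 'g) \<Rightarrow> 'g set \<Rightarrow> ('g \<Rightarrow> 'g \<Rightarrow> 'g) \<Rightarrow> ('g \<Rightarrow> 'g \<Rightarrow> 'g \<Rightarrow> 'g) \<Rightarrow> bool" where
  "LY_on s S br tr \<longleftrightarrow>
     vector_space s \<and> subspace_in s S \<and>
     (\<forall>x\<in>S. \<forall>y\<in>S. br x y \<in> S) \<and> (\<forall>x\<in>S. \<forall>y\<in>S. \<forall>z\<in>S. tr x y z \<in> S) \<and>
     bilinear_on s S br \<and> trilinear_on s S tr \<and>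
     (\<forall>x\<in>S. \<forall>y\<in>S. br x y = - br y x) \<and>
     (\<forall>x\<in>S. \<forall>y\<in>S. \<forall>z\<in>S. tr x y z = - tr y x z) \<and>
     (\<forall>x\<in>S. \<forall>y\<in>S. \<forall>z\<in>S.
        br (br x y) z + br (br y z) x + br (br z x) y + tr x y z + tr y z x + tr z x y = 0) \<and>
     (\<forall>x\<in>S. \<forall>y\<in>S. \<forall>z\<in>S. \<forall>w\<in>S.
        tr (br x y) z w + tr (br y z) x w + tr (br z x) y w = 0) \<and>
     (\<forall>x\<in>S. \<forall>y\<in>S. \<forall>z\<in>S. \<forall>w\<in>S.
        tr x y (br z w) = br (tr x y z) w + br z (tr x y w)) \<and>
     (\<forall>x\<in>S. \<forall>y\<in>S. \<forall>z\<in>S. \<forall>w\<in>S. \<forall>t\<in>S.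
        tr x y (tr z w t) = tr (tr x y z) w t + tr z (tr x y w) t + tr z w (tr x y t))"

definition LY_hom_on :: "('k::field \<Rightarrow> 'v::ab_group_add \<Rightarrow> 'v) \<Rightarrow> ('k \<Rightarrow> 'g::ab_group_add \<Rightarrow> 'g) \<Rightarrow> 'v set \<Rightarrow>
    ('v \<Rightarrow> 'v \<Rightarrow> 'v) \<Rightarrow> ('v \<Rightarrow> 'v \<Rightarrow> 'v \<Rightarrow> 'v) \<Rightarrow>
    ('g \<Rightarrow> 'g \<Rightarrow> 'g) \<Rightarrow> ('g \<Rightarrow> 'g \<Rightarrow> 'g \<Rightarrow> 'g) \<Rightarrow> ('v \<Rightarrow> 'g) \<Rightarrow> bool" where
  "LY_hom_on s1 s2 S br1 tr1 br2 tr2 f \<longleftrightarrow>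
     (\<forall>a. \<forall>x\<in>S. \<forall>y\<in>S. f (s1 a x + y) = s2 a (f x) + f y) \<and>
     (\<forall>x\<in>S. \<forall>y\<in>S. f (br1 x y) = br2 (f x) (f y)) \<and>
     (\<forall>x\<in>S. \<forall>y\<in>S. \<forall>z\<in>S. f (tr1 x y z) = tr2 (f x) (f y) (f z))"

definition LY_subalgebra :: "('k::field \<Rightarrow> 'g::ab_group_add \<Rightarrow> 'g) \<Rightarrow> ('g \<Rightarrow> 'g \<Rightarrow> 'g) \<Rightarrow> ('g \<Rightarrow> 'g \<Rightarrow> 'g \<Rightarrow> 'g) \<Rightarrow> 'g set \<Rightarrow> bool" where
  "LY_subalgebra s br tr H \<longleftrightarrow>
     subspace_in s H \<and>
     (\<forall>x\<in>H. \<forall>y\<in>H. br x y \<in> H) \<and> (\<forall>x\<in>H. \<forall>y\<in>H. \<forall>z\<in>H. tr x y z \<in> H)"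

definition Dop :: "('g \<Rightarrow> 'g \<Rightarrow> 'g) \<Rightarrow> ('g \<Rightarrow> 'v \<Rightarrow> 'v) \<Rightarrow> ('g \<Rightarrow> 'g \<Rightarrow> 'v \<Rightarrow> 'v) \<Rightarrow> 'g \<Rightarrow> 'g \<Rightarrow> 'v \<Rightarrow> 'v::ab_group_add" where
  "Dop br \<rho> \<mu> x y u = \<mu> y x u - \<mu> x y u + \<rho> x (\<rho> y u) - \<rho> y (\<rho> x u) - \<rho> (br x y) u"

text \<open>Representation (V; rho, mu) of the Lie-Yamaguti algebra (g, br, tr);
 gl(V) = linear endomorphisms of V, composition of operators written pointwise.\<close>
definition representation :: "('k::field \<Rightarrow> 'g::ab_group_add \<Rightarrow> 'g) \<Rightarrow> ('g \<Rightarrow> 'g \<Rightarrow> 'g) \<Rightarrow> ('g \<Rightarrow> 'g \<Rightarrow> 'g \<Rightarrow> 'g) \<Rightarrow>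
    ('k \<Rightarrow> 'v::ab_group_add \<Rightarrow> 'v) \<Rightarrow> ('g \<Rightarrow> 'v \<Rightarrow> 'v) \<Rightarrow> ('g \<Rightarrow> 'g \<Rightarrow> 'v \<Rightarrow> 'v) \<Rightarrow> bool" where
  "representation sg br tr sv \<rho> \<mu> \<longleftrightarrow>
     vector_space sv \<and>
     (\<forall>x a u v. \<rho> x (sv a u + v) = sv a (\<rho> x u) + \<rho> x v) \<and>
     (\<forall>x y a u v. \<mu> x y (sv a u + v) = sv a (\<mu> x y u) + \<mu> x y v) \<and>
     (\<forall>a x y u. \<rho> (sg a x + y) u = sv a (\<rho> x u) + \<rho> y u) \<and>
     (\<forall>a x y z u. \<mu> (sg a x + y) z u = sv a (\<mu> x z u) + \<mu> y z u \<and>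
                  \<mu> z (sg a x + y) u = sv a (\<mu> z x u) + \<mu> z y u) \<and>
     (\<forall>x y z u. \<mu> (br x y) z u - \<mu> x z (\<rho> y u) + \<mu> y z (\<rho> x u) = 0) \<and>
     (\<forall>x y z u. \<mu> x (br y z) u - \<rho> y (\<mu> x z u) + \<rho> z (\<mu> x y u) = 0) \<and>
     (\<forall>x y z u. \<rho> (tr x y z) u = Dop br \<rho> \<mu> x y (\<rho> z u) - \<rho> z (Dop br \<rho> \<mu> x y u)) \<and>
     (\<forall>x y z w u. \<mu> z w (\<mu> x y u) - \<mu> y w (\<mu> x z u) - \<mu> x (tr y z w) u
                   + Dop br \<rho> \<mu> y z (\<mu> x w u) = 0) \<and>
     (\<forall>x y z w u. \<mu> (tr x y z) w u + \<mu> z (tr x y w) u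
                   = Dop br \<rho> \<mu> x y (\<mu> z w u) - \<mu> z w (Dop br \<rho> \<mu> x y u))"

definition relative_RB :: "('k::field \<Rightarrow> 'g::ab_group_add \<Rightarrow> 'g) \<Rightarrow> ('g \<Rightarrow> 'g \<Rightarrow> 'g) \<Rightarrow> ('g \<Rightarrow> 'g \<Rightarrow> 'g \<Rightarrow> 'g) \<Rightarrow>
    ('k \<Rightarrow> 'v::ab_group_add \<Rightarrow> 'v) \<Rightarrow> ('g \<Rightarrow> 'v \<Rightarrow> 'v) \<Rightarrow> ('g \<Rightarrow> 'g \<Rightarrow> 'v \<Rightarrow> 'v) \<Rightarrow> ('v \<Rightarrow> 'g) \<Rightarrow> bool" where
  "relative_RB sg br tr sv \<rho> \<mu> T \<longleftrightarrow>
     (\<forall>a u v. T (sv a u + v) = sg a (T u) + T v) \<and>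
     (\<forall>u v. br (T u) (T v) = T (\<rho> (T u) v - \<rho> (T v) u)) \<and>
     (\<forall>u v w. tr (T u) (T v) (T w) =
        T (Dop br \<rho> \<mu> (T u) (T v) w + \<mu> (T v) (T w) u - \<mu> (T u) (T w) v))"

definition commC :: "('a \<Rightarrow> 'a \<Rightarrow> 'a::ab_group_add) \<Rightarrow> 'a \<Rightarrow> 'a \<Rightarrow> 'a" where
  "commC m x y = m x y - m y x"

definition assocr :: "('a \<Rightarrow> 'a \<Rightarrow> 'a::ab_group_add) \<Rightarrow> 'a \<Rightarrow> 'a \<Rightarrow> 'a \<Rightarrow> 'a" where
  "assocr m x y z = m (m x y) z - m x (m y z)"

definition triD :: "('a \<Rightarrow> 'a \<Rightarrow> 'a::ab_group_add) \<Rightarrow> ('a \<Rightarrow> 'a \<Rightarrow> 'a \<Rightarrow> 'a) \<Rightarrow> 'a \<Rightarrow> 'a \<Rightarrow> 'a \<Rightarrow> 'a" where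
  "triD m t x y z = t z y x - t z x y + assocr m y x z - assocr m x y z"

definition preLY_on :: "('k::field \<Rightarrow> 'a::ab_group_add \<Rightarrow> 'a) \<Rightarrow> 'a set \<Rightarrow> ('a \<Rightarrow> 'a \<Rightarrow> 'a) \<Rightarrow> ('a \<Rightarrow> 'a \<Rightarrow> 'a \<Rightarrow> 'a) \<Rightarrow> bool" where
  "preLY_on s S m t \<longleftrightarrow>
     vector_space s \<and> subspace_in s S \<and>
     (\<forall>x\<in>S. \<forall>y\<in>S. m x y \<in> S) \<and> (\<forall>x\<in>S. \<forall>y\<in>S. \<forall>z\<in>S. t x y z \<in> S) \<and>
     bilinear_on s S m \<and> trilinear_on s S t \<and>
     (\<forall>x\<in>S. \<forall>y\<in>S. \<forall>z\<in>S. \<forall>w\<in>S.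
        t z (commC m x y) w - t (m y z) x w + t (m x z) y w = 0) \<and>
     (\<forall>x\<in>S. \<forall>y\<in>S. \<forall>z\<in>S. \<forall>w\<in>S.
        t x y (commC m z w) = m z (t x y w) - m w (t x y z)) \<and>
     (\<forall>x\<in>S. \<forall>y\<in>S. \<forall>z\<in>S. \<forall>w\<in>S. \<forall>u\<in>S.
        t (t x y z) w u - t (t x y w) z u - t x y (triD m t z w u) - t x y (t z w u)
        + t x y (t w z u) + triD m t z w (t x y u) = 0) \<and>
     (\<forall>x\<in>S. \<forall>y\<in>S. \<forall>z\<in>S. \<forall>w\<in>S. \<forall>u\<in>S.
        t z (triD m t x y w) u + t z (t x y w) u - t z (t y x w) u
        + t z w (triD m t x y u) + t z w (t x y u) - t z w (t y x u)
        = triD m t x y (t z w u) - t (triD m t x y z) w u) \<and>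
     (\<forall>x\<in>S. \<forall>y\<in>S. \<forall>z\<in>S. \<forall>w\<in>S.
        m (triD m t x y z) w + m (t x y z) w - m (t y x z) w
        = triD m t x y (m z w) - m z (triD m t x y w))"

end

theory Submission
  imports Defs
begin

lemma addh:
  fixes f :: "'a::ab_group_add \<Rightarrow> 'b::ab_group_add"
  assumes h: "\<And>x y. f (x + y) = f x + f y"
  shows "f 0 = 0" "f (- x) = - f x" "f (x - y) = f x - f y"
proof -
  have h': "f (a + b) = f a + f b" for a b by (rule h)
  have "f 0 = f 0 + f 0" using h'[of 0 0] by simp
  then show z: "f 0 = 0" by simp
  have m: "f (- a) = - f a" for a
  proof -
    have "f (- a) + f a = 0" using h'[of "-a" a] z by simp
    then show ?thesis by (simp add: eq_neg_iff_add_eq_0)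
  qed
  show "f (- x) = - f x" by (rule m)
  show "f (x - y) = f x - f y" using h'[of x "-y"] m[of y] by simp
qed

lemma hl: "(a::'a::ab_group_add) - b + c = 0 \<Longrightarrow> a = b - c"
proof -
  assume h: "a - b + c = 0"
  have "a = a - (a - b + c)" using h by simp
  also have "\<dots> = b - c" by (simp add: algebra_simps)
  finally show ?thesis .
qed

locale LYRB =
  fixes sg :: "'k::field_char_0 \<Rightarrow> 'g::ab_group_add \<Rightarrow> 'g"
    and br :: "'g \<Rightarrow> 'g \<Rightarrow> 'g" and tr :: "'g \<Rightarrow> 'g \<Rightarrow> 'g \<Rightarrow> 'g"
    and sv :: "'k \<Rightarrow> 'v::ab_group_add \<Rightarrow> 'v"
    and \<rho> :: "'g \<Rightarrow> 'v \<Rightarrow> 'v" and \<mu> :: "'g \<Rightarrow> 'g \<Rightarrow> 'v \<Rightarrow> 'v" and T :: "'v \<Rightarrow> 'g"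
  assumes LY: "LY_on sg UNIV br tr"
    and rep: "representation sg br tr sv \<rho> \<mu>"
    and RB: "relative_RB sg br tr sv \<rho> \<mu> T"
begin

abbreviation DD where "DD \<equiv> Dop br \<rho> \<mu>"

lemmas lp = LY[unfolded LY_on_def]
lemmas rbp = RB[unfolded relative_RB_def]
lemma vsg: "vector_space sg" using LY unfolding LY_on_def by auto
lemmas rp = rep[unfolded representation_def]
lemma vsv: "vector_space sv" using conjunct1[OF rp] by auto
lemma msg: "module sg" using vsg module_iff_vector_space by blast
lemma msv: "module sv" using vsv module_iff_vector_space by blast

lemmas sg_simps = module.scale_one[OF msg] module.scale_right_distrib[OF msg]
  module.scale_right_diff_distrib[OF msg] module.scale_zero_right[OF msg]
  module.scale_minus_right[OF msg]
lemmas sv_simps = module.scale_one[OF msv] module.scale_right_distrib[OF msv]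
  module.scale_right_diff_distrib[OF msv] module.scale_zero_right[OF msv]
  module.scale_minus_right[OF msv]

lemma rho_lin2: "\<rho> x (sv a u + v) = sv a (\<rho> x u) + \<rho> x v"
  using conjunct1[OF conjunct2[OF rp]] by blast
lemma mu_lin3: "\<mu> x y (sv a u + v) = sv a (\<mu> x y u) + \<mu> x y v"
  using conjunct1[OF conjunct2[OF conjunct2[OF rp]]] by blast
lemma rho_lin1: "\<rho> (sg a x + y) u = sv a (\<rho> x u) + \<rho> y u"
  using conjunct1[OF conjunct2[OF conjunct2[OF conjunct2[OF rp]]]] by blast
lemma mu_lin1: "\<mu> (sg a x + y) z u = sv a (\<mu> x z u) + \<mu> y z u"
  using conjunct1[OF conjunct2[OF conjunct2[OF conjunct2[OF conjunct2[OF rp]]]]] by blast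
lemma mu_lin2: "\<mu> z (sg a x + y) u = sv a (\<mu> z x u) + \<mu> z y u"
  using conjunct1[OF conjunct2[OF conjunct2[OF conjunct2[OF conjunct2[OF rp]]]]] by blast
lemma rA: "\<mu> (br x y) z u = \<mu> x z (\<rho> y u) - \<mu> y z (\<rho> x u)"
  using conjunct1[OF conjunct2[OF conjunct2[OF conjunct2[OF conjunct2[OF conjunct2[OF rp]]]]]] by (intro hl) blast
lemma rB: "\<mu> x (br y z) u = \<rho> y (\<mu> x z u) - \<rho> z (\<mu> x y u)"
  using conjunct1[OF conjunct2[OF conjunct2[OF conjunct2[OF conjunct2[OF conjunct2[OF conjunct2[OF rp]]]]]]] by (intro hl) blast
lemma rC: "\<rho> (tr x y z) u = DD x y (\<rho> z u) - \<rho> z (DD x y u)"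
  using conjunct1[OF conjunct2[OF conjunct2[OF conjunct2[OF conjunct2[OF conjunct2[OF conjunct2[OF conjunct2[OF rp]]]]]]]] by blast
lemma rE: "\<mu> x (tr y z w) u = \<mu> z w (\<mu> x y u) - \<mu> y w (\<mu> x z u) + DD y z (\<mu> x w u)"
proof -
  have "\<mu> z w (\<mu> x y u) - \<mu> y w (\<mu> x z u) - \<mu> x (tr y z w) u + DD y z (\<mu> x w u) = 0"
    using conjunct1[OF conjunct2[OF conjunct2[OF conjunct2[OF conjunct2[OF conjunct2[OF conjunct2[OF conjunct2[OF conjunct2[OF rp]]]]]]]]] by blast
  then show ?thesis by (simp add: algebra_simps eq_iff_diff_eq_0[symmetric])
qed
lemma rF0: "\<mu> (tr x y z) w u + \<mu> z (tr x y w) u = DD x y (\<mu> z w u) - \<mu> z w (DD x y u)"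
  using conjunct2[OF conjunct2[OF conjunct2[OF conjunct2[OF conjunct2[OF conjunct2[OF conjunct2[OF conjunct2[OF conjunct2[OF rp]]]]]]]]] by blast
lemma rF: "\<mu> (tr x y z) w u = DD x y (\<mu> z w u) - \<mu> z w (DD x y u) - \<mu> z (tr x y w) u"
  using rF0[of x y z w u] by (simp add: algebra_simps)

lemma T_lin: "T (sv a u + v) = sg a (T u) + T v" using conjunct1[OF rbp] by blast
lemma RB1: "br (T u) (T v) = T (\<rho> (T u) v - \<rho> (T v) u)" using conjunct1[OF conjunct2[OF rbp]] by blast
lemma RB2: "tr (T u) (T v) (T w) = T (DD (T u) (T v) w + \<mu> (T v) (T w) u - \<mu> (T u) (T w) v)"
  using conjunct2[OF conjunct2[OF rbp]] by blast

lemma br_bil: "bilinear_on sg UNIV br" using conjunct1[OF conjunct2[OF conjunct2[OF conjunct2[OF conjunct2[OF lp]]]]] by blast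
lemma tr_tril: "trilinear_on sg UNIV tr" using conjunct1[OF conjunct2[OF conjunct2[OF conjunct2[OF conjunct2[OF conjunct2[OF lp]]]]]] by blast
lemma br_lin1: "br (sg a x + y) z = sg a (br x z) + br y z"
  using br_bil unfolding bilinear_on_def by blast
lemma br_lin2: "br z (sg a x + y) = sg a (br z x) + br z y"
  using br_bil unfolding bilinear_on_def by blast
lemma tr_lin1: "tr (sg a x + y) z w = sg a (tr x z w) + tr y z w"
  using tr_tril unfolding trilinear_on_def by blast
lemma tr_lin2: "tr z (sg a x + y) w = sg a (tr z x w) + tr z y w"
  using tr_tril unfolding trilinear_on_def by blast
lemma tr_lin3: "tr z w (sg a x + y) = sg a (tr z w x) + tr z w y"
  using tr_tril unfolding trilinear_on_def by blast
lemma br_skew: "br x y = - br y x" using conjunct1[OF conjunct2[OF conjunct2[OF conjunct2[OF conjunct2[OF conjunct2[OF conjunct2[OF lp]]]]]]] by blast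
lemma tr_skew: "tr x y z = - tr y x z" using conjunct1[OF conjunct2[OF conjunct2[OF conjunct2[OF conjunct2[OF conjunct2[OF conjunct2[OF conjunct2[OF lp]]]]]]]] by blast
lemma g1: "br (br x y) z + br (br y z) x + br (br z x) y + tr x y z + tr y z x + tr z x y = 0"
  using conjunct1[OF conjunct2[OF conjunct2[OF conjunct2[OF conjunct2[OF conjunct2[OF conjunct2[OF conjunct2[OF conjunct2[OF lp]]]]]]]]] by blast
lemma g3: "tr x y (br z w) = br (tr x y z) w + br z (tr x y w)"
  using conjunct1[OF conjunct2[OF conjunct2[OF conjunct2[OF conjunct2[OF conjunct2[OF conjunct2[OF conjunct2[OF conjunct2[OF conjunct2[OF conjunct2[OF lp]]]]]]]]]]] by blast

lemma rho_add2: "\<rho> x (u + v) = \<rho> x u + \<rho> x v" using rho_lin2[of x 1 u v] by (simp add: sv_simps)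
lemma mu_add3: "\<mu> x y (u + v) = \<mu> x y u + \<mu> x y v" using mu_lin3[of x y 1 u v] by (simp add: sv_simps)
lemma rho_add1: "\<rho> (x + y) u = \<rho> x u + \<rho> y u" using rho_lin1[of 1 x y u] by (simp add: sg_simps sv_simps)
lemma mu_add1: "\<mu> (x + y) z u = \<mu> x z u + \<mu> y z u" using mu_lin1[of 1 x y z u] by (simp add: sg_simps sv_simps)
lemma mu_add2: "\<mu> z (x + y) u = \<mu> z x u + \<mu> z y u" using mu_lin2[of z 1 x y u] by (simp add: sg_simps sv_simps)
lemma br_add1: "br (x + y) z = br x z + br y z" using br_lin1[of 1 x y z] by (simp add: sg_simps)
lemma br_add2: "br z (x + y) = br z x + br z y" using br_lin2[of z 1 x y] by (simp add: sg_simps)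
lemma tr_add1: "tr (x + y) z w = tr x z w + tr y z w" using tr_lin1[of 1 x y] by (simp add: sg_simps)
lemma tr_add2: "tr z (x + y) w = tr z x w + tr z y w" using tr_lin2[of z 1 x y] by (simp add: sg_simps)
lemma tr_add3: "tr z w (x + y) = tr z w x + tr z w y" using tr_lin3[of z w 1 x y] by (simp add: sg_simps)
lemma T_add: "T (u + v) = T u + T v" using T_lin[of 1 u v] by (simp add: sg_simps sv_simps)

lemmas rho2 = addh[of "\<rho> x", OF rho_add2] for x
lemmas rho1 = addh[of "\<lambda>x. \<rho> x u", OF rho_add1] for u
lemmas mu3 = addh[of "\<mu> x y", OF mu_add3] for x y
lemmas mu1 = addh[of "\<lambda>x. \<mu> x z u", OF mu_add1] for z u
lemmas mu2 = addh[of "\<lambda>x. \<mu> z x u", OF mu_add2] for z u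
lemmas br1 = addh[of "\<lambda>x. br x z", OF br_add1] for z
lemmas br2 = addh[of "br z", OF br_add2] for z
lemmas tr1 = addh[of "\<lambda>x. tr x z w", OF tr_add1] for z w
lemmas tr2 = addh[of "\<lambda>x. tr z x w", OF tr_add2] for z w
lemmas tr3 = addh[of "tr z w", OF tr_add3] for z w
lemmas Tl = addh[of T, OF T_add]

lemmas lin = rho_add2 rho_add1 mu_add1 mu_add2 mu_add3 br_add1 br_add2 tr_add1 tr_add2 tr_add3 T_add
  rho2 rho1 mu3 mu1 mu2 br1 br2 tr1 tr2 tr3 Tl

lemma rho_sc2: "\<rho> x (sv a u) = sv a (\<rho> x u)" using rho_lin2[of x a u 0] by (simp add: lin)
lemma mu_sc3: "\<mu> x y (sv a u) = sv a (\<mu> x y u)" using mu_lin3[of x y a u 0] by (simp add: lin)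
lemma rho_sc1: "\<rho> (sg a x) u = sv a (\<rho> x u)" using rho_lin1[of a x 0 u] by (simp add: lin)
lemma mu_sc1: "\<mu> (sg a x) z u = sv a (\<mu> x z u)" using mu_lin1[of a x 0 z u] by (simp add: lin)
lemma mu_sc2: "\<mu> z (sg a x) u = sv a (\<mu> z x u)" using mu_lin2[of z a x 0 u] by (simp add: lin)
lemma br_sc1: "br (sg a x) z = sg a (br x z)" using br_lin1[of a x 0 z] by (simp add: lin)
lemma br_sc2: "br z (sg a x) = sg a (br z x)" using br_lin2[of z a x 0] by (simp add: lin)
lemma tr_sc1: "tr (sg a x) z w = sg a (tr x z w)" using tr_lin1[of a x 0 z w] by (simp add: lin)
lemma tr_sc2: "tr z (sg a x) w = sg a (tr z x w)" using tr_lin2[of z a x 0 w] by (simp add: lin)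
lemma tr_sc3: "tr z w (sg a x) = sg a (tr z w x)" using tr_lin3[of z w a x 0] by (simp add: lin)
lemma T_sc: "T (sv a u) = sg a (T u)" using T_lin[of a u 0] by (simp add: lin)

lemmas sc = rho_sc2 mu_sc3 rho_sc1 mu_sc1 mu_sc2 br_sc1 br_sc2 tr_sc1 tr_sc2 tr_sc3 T_sc

lemmas S = Dop_def rA rB rC rE rF lin

definition bC where "bC u v = \<rho> (T u) v - \<rho> (T v) u"
definition tC where "tC u v w = DD (T u) (T v) w + \<mu> (T v) (T w) u - \<mu> (T u) (T w) v"

lemma T_bC: "T (bC u v) = br (T u) (T v)" unfolding bC_def by (simp add: RB1)
lemma T_tC: "T (tC u v w) = tr (T u) (T v) (T w)" unfolding tC_def by (simp add: RB2)

lemma lc: "(b::'a::ab_group_add) = 0 \<Longrightarrow> a - c + b = 0 \<Longrightarrow> a = c"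
  by simp
lemma lc0: "(b::'a::ab_group_add) = 0 \<Longrightarrow> a + b = 0 \<Longrightarrow> a = 0"
  by simp


lemma V1: "bC (bC x y) z + bC (bC y z) x + bC (bC z x) y + tC x y z + tC y z x + tC z x y = 0"
proof -
  have e: "bC (bC p q) r = \<rho> (br (T p) (T q)) r - \<rho> (T r) (bC p q)" for p q r
    by (simp only: bC_def[of "bC p q" r] T_bC)
  show ?thesis unfolding e by (simp add: S bC_def tC_def algebra_simps)
qed


lemma V2: "tC (bC x y) z w + tC (bC y z) x w + tC (bC z x) y w = 0"
proof -
  have e: "tC (bC p q) r w = DD (br (T p) (T q)) (T r) w + \<mu> (T r) (T w) (bC p q) - \<mu> (br (T p) (T q)) (T w) r" for p q r
    by (simp only: tC_def[of "bC p q" r w] T_bC)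
  have z: "\<rho> (br (br a b) c) w + \<rho> (br (br b c) a) w + \<rho> (br (br c a) b) w + \<rho> (tr a b c) w + \<rho> (tr b c a) w + \<rho> (tr c a b) w = 0" for a b c
    using arg_cong[OF g1[of a b c], of "\<lambda>g. \<rho> g w"] by (simp only: lin)
  show ?thesis unfolding e by (rule lc0[OF z[of "T x" "T y" "T z"]]) (simp add: S bC_def algebra_simps)
qed


lemma V3: "tC x y (bC z w) = bC (tC x y z) w + bC z (tC x y w)"
proof -
  have e1: "tC x y (bC z w) = DD (T x) (T y) (bC z w) + \<mu> (T y) (br (T z) (T w)) x - \<mu> (T x) (br (T z) (T w)) y"
    by (simp only: tC_def[of x y "bC z w"] T_bC)
  have e2: "bC (tC x y z) w = \<rho> (tr (T x) (T y) (T z)) w - \<rho> (T w) (tC x y z)"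
    by (simp only: bC_def[of "tC x y z" w] T_tC)
  have e3: "bC z (tC x y w) = \<rho> (T z) (tC x y w) - \<rho> (tr (T x) (T y) (T w)) z"
    by (simp only: bC_def[of z "tC x y w"] T_tC)
  show ?thesis unfolding e1 e2 e3 by (simp add: S bC_def tC_def algebra_simps)
qed


lemma V4: "tC x y (tC z w t) = tC (tC x y z) w t + tC z (tC x y w) t + tC z w (tC x y t)"
proof -
  have e1: "tC x y (tC z w t) = DD (T x) (T y) (tC z w t) + \<mu> (T y) (tr (T z) (T w) (T t)) x - \<mu> (T x) (tr (T z) (T w) (T t)) y"
    by (simp only: tC_def[of x y "tC z w t"] T_tC)
  have e2: "tC (tC x y z) w t = DD (tr (T x) (T y) (T z)) (T w) t + \<mu> (T w) (T t) (tC x y z) - \<mu> (tr (T x) (T y) (T z)) (T t) w"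
    by (simp only: tC_def[of "tC x y z" w t] T_tC)
  have e3: "tC z (tC x y w) t = DD (T z) (tr (T x) (T y) (T w)) t + \<mu> (tr (T x) (T y) (T w)) (T t) z - \<mu> (T z) (T t) (tC x y w)"
    by (simp only: tC_def[of z "tC x y w" t] T_tC)
  have e4: "tC z w (tC x y t) = DD (T z) (T w) (tC x y t) + \<mu> (T w) (tr (T x) (T y) (T t)) z - \<mu> (T z) (tr (T x) (T y) (T t)) w"
    by (simp only: tC_def[of z w "tC x y t"] T_tC)
  have zz: "\<rho> (tr a b (br c d)) u - \<rho> (br (tr a b c) d) u - \<rho> (br c (tr a b d)) u = 0" for a b c d u
    using arg_cong[OF g3[of a b c d], of "\<lambda>g. \<rho> g u"] by (simp add: rho_add1)
  show ?thesis unfolding e1 e2 e3 e4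
    by (rule lc[OF zz[of "T x" "T y" "T z" "T w" t]]) (simp add: S tC_def algebra_simps)
qed


lemma Vskew: "tC x y z = - tC y x z"
  unfolding tC_def using br_skew[of "T y" "T x"] by (simp add: Dop_def lin algebra_simps)



definition mR where "mR X Y = T (\<rho> X (inv T Y))"
definition tR where "tR X Y Z = T (\<mu> Y Z (inv T X))"

lemma invT: "T (inv T (T v)) = T v" by (simp add: f_inv_into_f)

lemma ker_rho: "T n = 0 \<Longrightarrow> T (\<rho> (T u) n) = 0"
  using RB1[of u n] by (simp add: lin)
lemma ker_mu: "T n = 0 \<Longrightarrow> T (\<mu> (T v) (T w) n) = 0"
  using RB2[of n v w] by (simp add: lin Dop_def)

lemma mT: "mR (T u) (T v) = T (\<rho> (T u) v)"
proof -
  let ?v = "inv T (T v)"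
  have "T (?v - v) = 0" using invT[of v] by (simp add: lin)
  then have "T (\<rho> (T u) (?v - v)) = 0" by (rule ker_rho)
  then show ?thesis unfolding mR_def by (simp add: lin)
qed

lemma tT: "tR (T u) (T v) (T w) = T (\<mu> (T v) (T w) u)"
proof -
  let ?u = "inv T (T u)"
  have "T (?u - u) = 0" using invT[of u] by (simp add: lin)
  then have "T (\<mu> (T v) (T w) (?u - u)) = 0" by (rule ker_mu)
  then show ?thesis unfolding tR_def by (simp add: lin)
qed

lemma tR_add2: "tR X (A + B) Z = tR X A Z + tR X B Z" unfolding tR_def by (simp add: lin)
lemma tR_add3: "tR X Z (A + B) = tR X Z A + tR X Z B" unfolding tR_def by (simp add: lin)
lemma mR_add1: "mR (A + B) Z = mR A Z + mR B Z" unfolding mR_def by (simp add: lin)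
lemmas tR2 = addh[of "\<lambda>A. tR X A Z", OF tR_add2] for X Z
lemmas tR3 = addh[of "\<lambda>A. tR X Z A", OF tR_add3] for X Z
lemmas mR1 = addh[of "\<lambda>A. mR A Z", OF mR_add1] for Z

lemma commC_T: "commC mR (T x) (T y) = T (bC x y)"
  unfolding commC_def bC_def by (simp add: mT lin)

lemma triD_T: "triD mR tR (T x) (T y) (T z) = T (DD (T x) (T y) z)"
proof -
  have hb: "\<rho> (br (T x) (T y)) z = \<rho> (T (\<rho> (T x) y)) z - \<rho> (T (\<rho> (T y) x)) z"
    by (simp add: RB1 lin)
  show ?thesis unfolding triD_def assocr_def
    by (simp add: mT tT Dop_def lin hb algebra_simps)
qed

lemma tsum: "triD mR tR (T x) (T y) (T z) + tR (T x) (T y) (T z) - tR (T y) (T x) (T z) = tr (T x) (T y) (T z)"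
  unfolding triD_T tT by (simp add: RB2 lin)

lemma gp3: "(a::'a::ab_group_add) - b - c - d + e + f = a - b - (c + d - e) + f" by (simp add: algebra_simps)
lemma gp4: "(a::'a::ab_group_add) + b - c + d + e - f = (a + b - c) + (d + e - f)" by (simp add: algebra_simps)

lemma P1: "tR (T z) (commC mR (T x) (T y)) (T w) - tR (mR (T y) (T z)) (T x) (T w) + tR (mR (T x) (T z)) (T y) (T w) = 0"
  by (simp only: commC_T mT tT) (simp add: T_bC S algebra_simps)

lemma P2: "tR (T x) (T y) (commC mR (T z) (T w)) = mR (T z) (tR (T x) (T y) (T w)) - mR (T w) (tR (T x) (T y) (T z))"
  by (simp only: commC_T mT tT) (simp add: T_bC S algebra_simps)

lemma P3: "tR (tR (T x) (T y) (T z)) (T w) (T u) - tR (tR (T x) (T y) (T w)) (T z) (T u)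
   - tR (T x) (T y) (triD mR tR (T z) (T w) (T u)) - tR (T x) (T y) (tR (T z) (T w) (T u))
   + tR (T x) (T y) (tR (T w) (T z) (T u)) + triD mR tR (T z) (T w) (tR (T x) (T y) (T u)) = 0"
proof -
  have G: "tR (T x) (T y) (triD mR tR (T z) (T w) (T u)) + tR (T x) (T y) (tR (T z) (T w) (T u))
     - tR (T x) (T y) (tR (T w) (T z) (T u)) = T (\<mu> (T y) (tr (T z) (T w) (T u)) x)"
  proof -
    have "tR (T x) (T y) (triD mR tR (T z) (T w) (T u)) + tR (T x) (T y) (tR (T z) (T w) (T u))
     - tR (T x) (T y) (tR (T w) (T z) (T u)) = tR (T x) (T y) (triD mR tR (T z) (T w) (T u) + tR (T z) (T w) (T u) - tR (T w) (T z) (T u))"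
      by (simp only: tR_add3 tR3(3))
    also have "\<dots> = tR (T x) (T y) (T (tC z w u))" by (simp only: tsum T_tC)
    also have "\<dots> = T (\<mu> (T y) (tr (T z) (T w) (T u)) x)" by (simp only: tT, simp only: T_tC)
    finally show ?thesis .
  qed
  show ?thesis unfolding gp3 G by (simp only: mT tT triD_T) (simp add: S algebra_simps)
qed

lemma P4: "tR (T z) (triD mR tR (T x) (T y) (T w)) (T u) + tR (T z) (tR (T x) (T y) (T w)) (T u)
   - tR (T z) (tR (T y) (T x) (T w)) (T u) + tR (T z) (T w) (triD mR tR (T x) (T y) (T u))
   + tR (T z) (T w) (tR (T x) (T y) (T u)) - tR (T z) (T w) (tR (T y) (T x) (T u))
   = triD mR tR (T x) (T y) (tR (T z) (T w) (T u)) - tR (triD mR tR (T x) (T y) (T z)) (T w) (T u)"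
proof -
  have G1: "tR (T z) (triD mR tR (T x) (T y) (T w)) (T u) + tR (T z) (tR (T x) (T y) (T w)) (T u)
   - tR (T z) (tR (T y) (T x) (T w)) (T u) = T (\<mu> (tr (T x) (T y) (T w)) (T u) z)"
  proof -
    have "tR (T z) (triD mR tR (T x) (T y) (T w)) (T u) + tR (T z) (tR (T x) (T y) (T w)) (T u)
   - tR (T z) (tR (T y) (T x) (T w)) (T u) = tR (T z) (triD mR tR (T x) (T y) (T w) + tR (T x) (T y) (T w) - tR (T y) (T x) (T w)) (T u)"
      by (simp only: tR_add2 tR2(3))
    also have "\<dots> = tR (T z) (T (tC x y w)) (T u)" by (simp only: tsum T_tC)
    also have "\<dots> = T (\<mu> (tr (T x) (T y) (T w)) (T u) z)" by (simp only: tT, simp only: T_tC)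
    finally show ?thesis .
  qed
  have G2: "tR (T z) (T w) (triD mR tR (T x) (T y) (T u))
   + tR (T z) (T w) (tR (T x) (T y) (T u)) - tR (T z) (T w) (tR (T y) (T x) (T u)) = T (\<mu> (T w) (tr (T x) (T y) (T u)) z)"
  proof -
    have "tR (T z) (T w) (triD mR tR (T x) (T y) (T u))
   + tR (T z) (T w) (tR (T x) (T y) (T u)) - tR (T z) (T w) (tR (T y) (T x) (T u)) = tR (T z) (T w) (triD mR tR (T x) (T y) (T u) + tR (T x) (T y) (T u) - tR (T y) (T x) (T u))"
      by (simp only: tR_add3 tR3(3))
    also have "\<dots> = tR (T z) (T w) (T (tC x y u))" by (simp only: tsum T_tC)
    also have "\<dots> = T (\<mu> (T w) (tr (T x) (T y) (T u)) z)" by (simp only: tT, simp only: T_tC)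
    finally show ?thesis .
  qed
  show ?thesis unfolding gp4 unfolding G1 G2 by (simp only: mT tT triD_T) (simp add: S algebra_simps)
qed

lemma P5: "mR (triD mR tR (T x) (T y) (T z)) (T w) + mR (tR (T x) (T y) (T z)) (T w) - mR (tR (T y) (T x) (T z)) (T w)
   = triD mR tR (T x) (T y) (mR (T z) (T w)) - mR (T z) (triD mR tR (T x) (T y) (T w))"
proof -
  have G: "mR (triD mR tR (T x) (T y) (T z)) (T w) + mR (tR (T x) (T y) (T z)) (T w) - mR (tR (T y) (T x) (T z)) (T w)
    = T (\<rho> (tr (T x) (T y) (T z)) w)"
  proof -
    have "mR (triD mR tR (T x) (T y) (T z)) (T w) + mR (tR (T x) (T y) (T z)) (T w) - mR (tR (T y) (T x) (T z)) (T w)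
      = mR (triD mR tR (T x) (T y) (T z) + tR (T x) (T y) (T z) - tR (T y) (T x) (T z)) (T w)"
      by (simp only: mR_add1 mR1(3))
    also have "\<dots> = mR (T (tC x y z)) (T w)" by (simp only: tsum T_tC)
    also have "\<dots> = T (\<rho> (tr (T x) (T y) (T z)) w)" by (simp only: mT, simp only: T_tC)
    finally show ?thesis .
  qed
  show ?thesis unfolding G by (simp only: mT tT triD_T) (simp add: S algebra_simps)
qed


lemma bC_bil: "bilinear_on sv UNIV bC"
  unfolding bilinear_on_def bC_def by (simp add: lin sc sv_simps algebra_simps)

lemma tC_tril: "trilinear_on sv UNIV tC"
  unfolding trilinear_on_def tC_def by (simp add: Dop_def lin sc sv_simps algebra_simps)

lemma LYV: "LY_on sv UNIV bC tC"
  unfolding LY_on_def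
proof (intro conjI)
  show "vector_space sv" by (rule vsv)
  show "subspace_in sv UNIV" by (simp add: subspace_in_def)
  show "bilinear_on sv UNIV bC" by (rule bC_bil)
  show "trilinear_on sv UNIV tC" by (rule tC_tril)
  show "\<forall>x\<in>UNIV. \<forall>y\<in>UNIV. bC x y = - bC y x" by (simp add: bC_def)
  show "\<forall>x\<in>UNIV. \<forall>y\<in>UNIV. \<forall>z\<in>UNIV. tC x y z = - tC y x z" using Vskew by blast
  show "\<forall>x\<in>UNIV. \<forall>y\<in>UNIV. \<forall>z\<in>UNIV.
        bC (bC x y) z + bC (bC y z) x + bC (bC z x) y + tC x y z + tC y z x + tC z x y = 0"
    using V1 by blast
  show "\<forall>x\<in>UNIV. \<forall>y\<in>UNIV. \<forall>z\<in>UNIV. \<forall>w\<in>UNIV.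
        tC (bC x y) z w + tC (bC y z) x w + tC (bC z x) y w = 0"
    using V2 by blast
  show "\<forall>x\<in>UNIV. \<forall>y\<in>UNIV. \<forall>z\<in>UNIV. \<forall>w\<in>UNIV.
        tC x y (bC z w) = bC (tC x y z) w + bC z (tC x y w)"
    using V3 by blast
  show "\<forall>x\<in>UNIV. \<forall>y\<in>UNIV. \<forall>z\<in>UNIV. \<forall>w\<in>UNIV. \<forall>t\<in>UNIV.
        tC x y (tC z w t) = tC (tC x y z) w t + tC z (tC x y w) t + tC z w (tC x y t)"
    using V4 by blast
qed (auto)

lemma homV: "LY_hom_on sv sg UNIV bC tC br tr T"
  unfolding LY_hom_on_def using T_lin T_bC T_tC by blast

lemma subT: "subspace_in sg (range T)"
  unfolding subspace_in_def
proof (intro conjI ballI allI)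
  show "0 \<in> range T" using Tl(1) by (metis rangeI)
  fix X Y assume "X \<in> range T" "Y \<in> range T"
  then obtain x y where "X = T x" "Y = T y" by blast
  then show "X + Y \<in> range T" using T_add[of x y] by (metis rangeI)
next
  fix c X assume "X \<in> range T"
  then obtain x where "X = T x" by blast
  then show "sg c X \<in> range T" using T_sc[of c x] by (metis rangeI)
qed

lemma subalg: "LY_subalgebra sg br tr (range T)"
  unfolding LY_subalgebra_def
proof (intro conjI ballI)
  show "subspace_in sg (range T)" by (rule subT)
  fix X Y Z assume "X \<in> range T" "Y \<in> range T" "Z \<in> range T"
  then obtain x y z where h: "X = T x" "Y = T y" "Z = T z" by blast
  show "br X Y \<in> range T" unfolding h T_bC[symmetric] by (rule rangeI)
  show "tr X Y Z \<in> range T" unfolding h T_tC[symmetric] by (rule rangeI)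
qed

lemma mR_bl: "bilinear_on sg (range T) mR"
  unfolding bilinear_on_def
proof (intro allI ballI conjI)
  fix a X Y Z assume "X \<in> range T" "Y \<in> range T" "Z \<in> range T"
  then obtain x y z where h: "X = T x" "Y = T y" "Z = T z" by blast
  have eq: "sg a (T x) + T y = T (sv a x + y)" by (simp add: T_lin)
  show "mR (sg a X + Y) Z = sg a (mR X Z) + mR Y Z" unfolding h eq mT by (simp add: T_lin rho_lin1)
  show "mR Z (sg a X + Y) = sg a (mR Z X) + mR Z Y" unfolding h eq mT by (simp add: T_lin rho_lin2)
qed

lemma tR_tl: "trilinear_on sg (range T) tR"
  unfolding trilinear_on_def
proof (intro allI ballI conjI)
  fix a X Y Z W assume "X \<in> range T" "Y \<in> range T" "Z \<in> range T" "W \<in> range T"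
  then obtain x y z w where h: "X = T x" "Y = T y" "Z = T z" "W = T w" by blast
  have eq: "sg a (T x) + T y = T (sv a x + y)" by (simp add: T_lin)
  show "tR (sg a X + Y) Z W = sg a (tR X Z W) + tR Y Z W" unfolding h eq tT by (simp add: T_lin mu_lin3)
  show "tR Z (sg a X + Y) W = sg a (tR Z X W) + tR Z Y W" unfolding h eq tT by (simp add: T_lin mu_lin1)
  show "tR Z W (sg a X + Y) = sg a (tR Z W X) + tR Z W Y" unfolding h eq tT by (simp add: T_lin mu_lin2)
qed

lemma preLY: "preLY_on sg (range T) mR tR"
  unfolding preLY_on_def
proof (intro conjI)
  show "vector_space sg" by (rule vsg)
  show "subspace_in sg (range T)" by (rule subT)
  show "\<forall>x\<in>range T. \<forall>y\<in>range T. mR x y \<in> range T" by (simp add: mR_def)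
  show "\<forall>x\<in>range T. \<forall>y\<in>range T. \<forall>z\<in>range T. tR x y z \<in> range T" by (simp add: tR_def)
  show "bilinear_on sg (range T) mR" by (rule mR_bl)
  show "trilinear_on sg (range T) tR" by (rule tR_tl)
  show "\<forall>x\<in>range T. \<forall>y\<in>range T. \<forall>z\<in>range T. \<forall>w\<in>range T.
        tR z (commC mR x y) w - tR (mR y z) x w + tR (mR x z) y w = 0"
    by (intro ballI, elim rangeE, simp only: P1)
  show "\<forall>x\<in>range T. \<forall>y\<in>range T. \<forall>z\<in>range T. \<forall>w\<in>range T.
        tR x y (commC mR z w) = mR z (tR x y w) - mR w (tR x y z)"
    by (intro ballI, elim rangeE, simp only: P2)
  show "\<forall>x\<in>range T. \<forall>y\<in>range T. \<forall>z\<in>range T. \<forall>w\<in>range T. \<forall>u\<in>range T.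
        tR (tR x y z) w u - tR (tR x y w) z u - tR x y (triD mR tR z w u) - tR x y (tR z w u)
        + tR x y (tR w z u) + triD mR tR z w (tR x y u) = 0"
    by (intro ballI, elim rangeE, simp only: P3)
  show "\<forall>x\<in>range T. \<forall>y\<in>range T. \<forall>z\<in>range T. \<forall>w\<in>range T. \<forall>u\<in>range T.
        tR z (triD mR tR x y w) u + tR z (tR x y w) u - tR z (tR y x w) u
        + tR z w (triD mR tR x y u) + tR z w (tR x y u) - tR z w (tR y x u)
        = triD mR tR x y (tR z w u) - tR (triD mR tR x y z) w u"
    by (intro ballI, elim rangeE, simp only: P4)
  show "\<forall>x\<in>range T. \<forall>y\<in>range T. \<forall>z\<in>range T. \<forall>w\<in>range T.
        mR (triD mR tR x y z) w + mR (tR x y z) w - mR (tR y x z) w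
        = triD mR tR x y (mR z w) - mR z (triD mR tR x y w)"
    by (intro ballI, elim rangeE, simp only: P5)
qed

end

theorem corollary3p14:
  fixes sg :: "'k::field_char_0 \<Rightarrow> 'g::ab_group_add \<Rightarrow> 'g"
    and br :: "'g \<Rightarrow> 'g \<Rightarrow> 'g" and tr :: "'g \<Rightarrow> 'g \<Rightarrow> 'g \<Rightarrow> 'g"
    and sv :: "'k \<Rightarrow> 'v::ab_group_add \<Rightarrow> 'v"
    and \<rho> :: "'g \<Rightarrow> 'v \<Rightarrow> 'v" and \<mu> :: "'g \<Rightarrow> 'g \<Rightarrow> 'v \<Rightarrow> 'v" and T :: "'v \<Rightarrow> 'g"
  assumes LY: "LY_on sg UNIV br tr"
    and rep: "representation sg br tr sv \<rho> \<mu>"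
    and RB: "relative_RB sg br tr sv \<rho> \<mu> T"
  defines "mult \<equiv> (\<lambda>u v. \<rho> (T u) v)"
    and "tri \<equiv> (\<lambda>u v w. \<mu> (T v) (T w) u)"
    and "brC \<equiv> (\<lambda>u v. \<rho> (T u) v - \<rho> (T v) u)"
    and "trC \<equiv> (\<lambda>u v w. Dop br \<rho> \<mu> (T u) (T v) w + \<mu> (T v) (T w) u - \<mu> (T u) (T w) v)"
  shows "LY_on sv UNIV brC trC
       \<and> LY_hom_on sv sg UNIV brC trC br tr T
       \<and> LY_subalgebra sg br tr (range T)
       \<and> (\<exists>m t. (\<forall>u v. m (T u) (T v) = T (mult u v))
              \<and> (\<forall>u v w. t (T u) (T v) (T w) = T (tri u v w))
              \<and> preLY_on sg (range T) m t)"
proof -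
  interpret L: LYRB sg br tr sv \<rho> \<mu> T using LY rep RB by (rule LYRB.intro)
  have hb: "brC = L.bC" unfolding brC_def by (intro ext) (simp add: L.bC_def)
  have ht: "trC = L.tC" unfolding trC_def by (intro ext) (simp add: L.tC_def)
  have ex: "\<exists>m t. (\<forall>u v. m (T u) (T v) = T (mult u v))
              \<and> (\<forall>u v w. t (T u) (T v) (T w) = T (tri u v w))
              \<and> preLY_on sg (range T) m t"
  proof (intro exI conjI allI)
    show "L.mR (T u) (T v) = T (mult u v)" for u v unfolding mult_def by (simp add: L.mT)
    show "L.tR (T u) (T v) (T w) = T (tri u v w)" for u v w unfolding tri_def by (simp add: L.tT)
    show "preLY_on sg (range T) L.mR L.tR" by (rule L.preLY)
  qed
  show ?thesis unfolding hb ht using L.LYV L.homV L.subalg ex by blast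
qed

end
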